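(* Let $\mathbb{D}\subset\mathbb{C}$ be the unit disc and $\mathbb{B}_m\subset\mathbb{C}^m$ the unit ball. Let $F:\mathbb{D}\to\mathbb{B}_m$ be holomorphic, and suppose that for a point $\zeta$ with $|\zeta|=1$, $F$ extends to $\zeta$ with $\|F(\zeta)\|=1$ and $F$ is differentiable at $\zeta$. Then $$\|F'(\zeta)\|\ \ge\ \frac{2(1-\|F(0)\|)^2}{\,1-\|F(0)\|^2+\|F'(0)\|\,}.$$ Moreover, with $a=F(0)$, $$\|F'(\zeta)\|\ \ge\ \begin{cases}\dfrac{2(1-\|a\|)^2}{\,1-\|a\|^2+\sqrt{1-\|a\|^2}\,}, & m\ge 2,\\[2mm] \dfrac{1-|a|}{1+|a|}, & m=1.\end{cases}$$
   Context: $\|\cdot\|$ denotes the Euclidean norm on $\mathbb{C}^m$. *)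

theory Defs
  imports "HOL-Analysis.Analysis"
begin

end

theory Submission
  imports Defs "HOL-Complex_Analysis.Complex_Analysis"
begin


definition mob :: "complex \<Rightarrow> complex \<Rightarrow> complex" where
  "mob b w = (w - b) / (1 - cnj b * w)"

lemma mob_den_nz:
  assumes "norm b < 1" "norm w \<le> 1" shows "1 - cnj b * w \<noteq> 0"
proof
  assume "1 - cnj b * w = 0"
  then have "norm (cnj b * w) = 1" by (metis eq_iff_diff_eq_0 norm_one)
  moreover have "norm (cnj b * w) < 1"
  proof -
    have "norm b * norm w \<le> norm b" using assms(2) by (simp add: mult_left_le)
    then show ?thesis using assms(1) by (simp add: norm_mult)
  qed
  ultimately show False by simp
qed

lemma mob_id:
  assumes "1 - cnj b * w \<noteq> 0"
  shows "1 - norm (mob b w) ^ 2 = (1 - norm b ^ 2) * (1 - norm w ^ 2) / norm (1 - cnj b * w) ^ 2"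
proof -
  have "norm (1 - cnj b * w) ^ 2 \<noteq> 0" using assms by simp
  then show ?thesis
    using assms
    apply (cases b; cases w)
    apply (simp add: mob_def divide_simps norm_divide)
    apply (simp add: complex_norm complex_diff complex_mult one_complex.code complex_cnj)
    apply (auto simp: algebra_simps power2_eq_square)
    done
qed

lemma mob_inv:
  assumes "norm b < 1" "norm w \<le> 1"
  shows "mob (-b) (mob b w) = w"
proof -
  define D where "D = 1 - cnj b * w"
  have d: "D \<noteq> 0" unfolding D_def using mob_den_nz assms by blast
  have nb: "norm (cnj b * b) < 1"
  proof -
    have "norm (cnj b * b) = norm b ^ 2" by (simp add: norm_mult power2_eq_square)
    also have "\<dots> < 1" using assms(1) by (simp add: abs_square_less_1)
    finally show ?thesis .
  qed
  then have e: "1 - cnj b * b \<noteq> 0" by auto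
  have 1: "(w-b)/D + b = w*(1 - cnj b*b)/D"
    using d by (simp add: add_divide_eq_iff D_def algebra_simps)
  have 2: "1 + cnj b * ((w-b)/D) = (1 - cnj b*b)/D"
    using d by (simp add: add_divide_eq_iff D_def algebra_simps)
  have "mob (-b) (mob b w) = ((w-b)/D + b) / (1 + cnj b * ((w-b)/D))"
    by (simp add: mob_def D_def)
  also have "\<dots> = w" unfolding 1 2 using d e by simp
  finally show ?thesis .
qed

lemma mob_deriv:
  assumes "1 - cnj b * w \<noteq> 0"
  shows "(mob b has_field_derivative (1 - cnj b * b) / (1 - cnj b * w)^2) (at w within S)"
proof -
  have h: "((\<lambda>w. (w - b) / (1 - cnj b * w)) has_field_derivative
        (1 * (1 - cnj b * w) - (w - b) * (- cnj b)) / (1 - cnj b * w)^2) (at w within S)"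
    using assms by (auto intro!: derivative_eq_intros simp: power2_eq_square)
  have eq: "(1 * (1 - cnj b * w) - (w - b) * (- cnj b)) = 1 - cnj b * b"
    by (simp add: algebra_simps)
  have m: "mob b = (\<lambda>w. (w - b) / (1 - cnj b * w))" by (simp add: mob_def fun_eq_iff)
  show ?thesis using h by (simp only: m eq)
qed

lemma mob_lt1:
  assumes "norm b < 1" "norm w < 1" shows "norm (mob b w) < 1"
proof -
  have d: "1 - cnj b * w \<noteq> 0" using mob_den_nz assms by force
  have "0 < (1 - norm b ^ 2) * (1 - norm w ^ 2) / norm (1 - cnj b * w) ^ 2"
    using assms d by (intro divide_pos_pos mult_pos_pos) (auto simp: power_less_one_iff abs_square_less_1)
  then have "norm (mob b w) ^ 2 < 1" using mob_id[OF d] by linarith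
  then show ?thesis by (simp add: power_less_one_iff abs_square_less_1)
qed

lemma mob_holo:
  assumes "norm b < 1" shows "mob b holomorphic_on ball 0 1"
proof -
  have "mob b field_differentiable at w" if "w \<in> ball 0 1" for w
  proof -
    have "norm w \<le> 1" using that by simp
    then show ?thesis unfolding field_differentiable_def
      using mob_deriv[OF mob_den_nz[OF assms]] by blast
  qed
  then show ?thesis
    by (simp add: holomorphic_on_def field_differentiable_at_within)
qed

lemma schwarz_M:
  assumes holh: "h holomorphic_on ball 0 1" and h0: "h 0 = 0"
    and hM: "\<And>z. norm z < 1 \<Longrightarrow> norm (h z) < M"
    and dh: "(h has_field_derivative d) (at 0)"
  shows "norm d \<le> M"
proof -
  have M: "M > 0" using hM[of 0] h0 by simp
  define g where "g z = h z / of_real M" for z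
  have holg: "g holomorphic_on ball 0 1" unfolding g_def[abs_def]
    using holh M by (intro holomorphic_intros) auto
  have g0: "g 0 = 0" by (simp add: g_def h0)
  have glt: "norm (g z) < 1" if "norm z < 1" for z
    using hM[OF that] M by (simp add: g_def norm_divide)
  have "(g has_field_derivative d / of_real M) (at 0)"
    unfolding g_def[abs_def] using dh M by (intro derivative_eq_intros) auto
  then have "deriv g 0 = d / of_real M" by (rule DERIV_imp_deriv)
  moreover have "norm (deriv g 0) \<le> 1" using Schwarz_Lemma(2)[OF holg g0 glt, of 0] by simp
  ultimately have "norm d / M \<le> 1" using M by (simp add: norm_divide)
  then show ?thesis using M by (simp add: divide_le_eq)
qed

lemma schwarz_refined:
  assumes holh: "h holomorphic_on ball 0 1" and h0: "h 0 = 0"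
    and hlt: "\<And>z. norm z < 1 \<Longrightarrow> norm (h z) < 1" and z: "norm z < 1"
  shows "norm (h z) \<le> norm z * (norm z + norm (deriv h 0)) / (1 + norm (deriv h 0) * norm z)"
proof -
  define c where "c = deriv h 0"
  obtain \<psi> where hol\<psi>: "\<psi> holomorphic_on ball 0 1" and hz: "\<And>z. norm z < 1 \<Longrightarrow> h z = z * \<psi> z"
    and c\<psi>: "deriv h 0 = \<psi> 0"
    using Schwarz3[OF holh h0] by blast
  have c1: "norm c \<le> 1" using Schwarz_Lemma(2)[OF holh h0 hlt, of 0] c_def by simp
  show ?thesis
  proof (cases "norm c = 1")
    case True
    then obtain \<alpha> where "\<And>z. norm z < 1 \<Longrightarrow> h z = \<alpha> * z" "norm \<alpha> = 1"
      using Schwarz_Lemma(3)[OF holh h0 hlt, of 0] c_def by auto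
    then have "norm (h z) = norm z" using z by (simp add: norm_mult)
    moreover have "norm z * (norm z + 1) / (1 + 1 * norm z) = norm z"
    proof -
      have "1 + norm z \<noteq> 0" using norm_ge_zero[of z] by linarith
      then show ?thesis by (simp add: add.commute)
    qed
    ultimately show ?thesis using True c_def by simp
  next
    case False
    then have c1': "norm c < 1" using c1 by simp
    have \<psi>lt: "norm (\<psi> w) < 1" if w: "norm w < 1" for w
    proof (cases "w = 0")
      case True then show ?thesis using c1' c\<psi> c_def by simp
    next
      case False
      have "norm (h w) \<le> norm w" using Schwarz_Lemma(1)[OF holh h0 hlt w] .
      then have le: "norm (\<psi> w) \<le> 1" using hz[OF w] False by (simp add: norm_mult)
      show ?thesis
      proof (rule ccontr)
        assume "\<not> norm (\<psi> w) < 1"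
        then have "norm (h w) = norm w" using le hz[OF w] by (simp add: norm_mult)
        then have "\<exists>\<alpha>. (\<forall>z. norm z < 1 \<longrightarrow> h z = \<alpha> * z) \<and> norm \<alpha> = 1"
          using w False by (intro Schwarz_Lemma(3)[OF holh h0 hlt, of 0]) auto
        then obtain \<alpha> where \<alpha>: "\<And>z. norm z < 1 \<Longrightarrow> h z = \<alpha> * z" "norm \<alpha> = 1"
          by blast
        have "((\<lambda>z. \<alpha> * z) has_field_derivative \<alpha>) (at 0)"
          by (auto intro!: derivative_eq_intros)
        then have "(h has_field_derivative \<alpha>) (at 0)"
          by (rule has_field_derivative_transform_within_open[where S="ball 0 1"]) (use \<alpha> in auto)
        then have "c = \<alpha>" unfolding c_def by (rule DERIV_imp_deriv)
        then show False using \<alpha>(2) c1' by simp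
      qed
    qed
    define g where "g w = mob c (\<psi> w)" for w
    have holg: "g holomorphic_on ball 0 1" unfolding g_def[abs_def]
      apply (rule holomorphic_on_compose_gen[OF hol\<psi> mob_holo[OF c1'], unfolded o_def])
      using \<psi>lt by auto
    have g0: "g 0 = 0" unfolding g_def mob_def using c\<psi> c_def by simp
    have glt: "norm (g w) < 1" if "norm w < 1" for w
      unfolding g_def using mob_lt1[OF c1' \<psi>lt[OF that]] .
    have gz: "norm (g z) \<le> norm z" using Schwarz_Lemma(1)[OF holg g0 glt z] .
    have g1: "norm (g z) < 1" using glt[OF z] .
    have inv: "\<psi> z = mob (-c) (g z)" unfolding g_def
      using mob_inv[OF c1', of "\<psi> z"] \<psi>lt[OF z] by simp
    define t where "t = norm z"
    define k where "k = norm c"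
    have t: "0 \<le> t" "t < 1" using z t_def by auto
    have k: "0 \<le> k" "k < 1" using c1' k_def by auto
    have den: "1 - cnj (-c) * g z \<noteq> 0" using mob_den_nz[of "-c" "g z"] c1' g1 by simp
    have id: "1 - norm (\<psi> z) ^ 2 = (1 - k^2) * (1 - norm (g z)^2) / norm (1 - cnj (-c) * g z) ^ 2"
      unfolding inv k_def using mob_id[OF den] by simp
    have dn: "norm (1 - cnj (-c) * g z) \<le> 1 + k * t"
    proof -
      have "norm (1 - cnj (-c) * g z) \<le> 1 + norm (cnj (-c) * g z)" using norm_triangle_ineq4[of 1 "cnj (-c) * g z"] by simp
      also have "\<dots> \<le> 1 + k * t" using gz by (simp add: norm_mult k_def t_def mult_left_mono)
      finally show ?thesis .
    qed
    have dpos: "0 < norm (1 - cnj (-c) * g z)" using den by simp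
    have "(1 - k^2) * (1 - t^2) / (1 + k*t)^2 \<le> (1 - k^2) * (1 - norm (g z)^2) / norm (1 - cnj (-c) * g z) ^ 2"
    proof (rule frac_le)
      show "0 \<le> (1 - k^2) * (1 - norm (g z)^2)" using k g1
        by (intro mult_nonneg_nonneg) (auto simp: abs_square_le_1 power_le_one)
      show "(1 - k^2) * (1 - t^2) \<le> (1 - k^2) * (1 - norm (g z)^2)"
        using k gz t_def by (intro mult_left_mono) (auto intro: power_mono simp: abs_square_le_1)
      show "0 < norm (1 - cnj (-c) * g z) ^ 2" using dpos by simp
      show "norm (1 - cnj (-c) * g z) ^ 2 \<le> (1 + k*t)^2" using dn dpos by (intro power_mono) auto
    qed
    moreover have "(1 - k^2) * (1 - t^2) / (1 + k*t)^2 = 1 - ((t + k) / (1 + k*t))^2"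
    proof -
      have p: "(1 + k*t)^2 \<noteq> 0" using k t by (simp add: add_nonneg_eq_0_iff)
      have e1: "((t+k)/(1+k*t))^2 = (t+k)^2/(1+k*t)^2" by (simp add: power_divide)
      have e2: "1 - (t+k)^2/(1+k*t)^2 = ((1+k*t)^2 - (t+k)^2)/(1+k*t)^2"
        using p by (simp add: diff_divide_distrib)
      have e3: "(1+k*t)^2 - (t+k)^2 = (1-k^2)*(1-t^2)" by (simp add: power2_eq_square algebra_simps)
      show ?thesis unfolding e1 e2 e3 ..
    qed
    ultimately have "norm (\<psi> z) ^ 2 \<le> ((t + k) / (1 + k*t))^2" using id by linarith
    moreover have nn: "0 \<le> (t + k) / (1 + k*t)" using k t by simp
    ultimately have psle: "norm (\<psi> z) \<le> (t + k) / (1 + k*t)"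
      by (rule power2_le_imp_le)
    have "norm (h z) = t * norm (\<psi> z)" by (simp add: hz[OF z] norm_mult t_def)
    also have "\<dots> \<le> t * ((t + k) / (1 + k*t))" using mult_left_mono[OF psle t(1)] .
    finally show ?thesis by (simp add: t_def k_def c_def)
  qed
qed



lemma scalar_boundary:
  assumes holf: "f holomorphic_on ball 0 1" and fmaps: "\<And>z. norm z < 1 \<Longrightarrow> norm (f z) < 1"
    and bd: "norm \<zeta> = 1" and fz: "norm (f \<zeta>) = 1"
    and d\<zeta>: "(f has_field_derivative d) (at \<zeta> within ball 0 1)"
    and d0: "(f has_field_derivative d0) (at 0)"
  shows "norm d \<ge> 2 * (1 - norm (f 0))^2 / (1 - (norm (f 0))^2 + norm d0)"
proof -
  define b where "b = f 0"
  define nb where "nb = norm b"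
  have nb1: "nb < 1" "0 \<le> nb" using fmaps[of 0] b_def nb_def by auto
  have b1: "norm b < 1" using nb1 nb_def by simp
  define \<Phi> where "\<Phi> z = mob b (f z)" for z
  have hol\<Phi>: "\<Phi> holomorphic_on ball 0 1" unfolding \<Phi>_def[abs_def]
    by (rule holomorphic_on_compose_gen[OF holf mob_holo[OF b1], unfolded o_def]) (use fmaps in auto)
  have \<Phi>0: "\<Phi> 0 = 0" by (simp add: \<Phi>_def mob_def b_def)
  have \<Phi>lt: "norm (\<Phi> z) < 1" if "norm z < 1" for z
    unfolding \<Phi>_def using mob_lt1[OF b1 fmaps[OF that]] .
  have cb: "cnj b * b = of_real (nb^2)"
  proof -
    have "cnj b * b = of_real (norm b)^2" using complex_norm_square[of b] by (simp add: mult.commute)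
    then show ?thesis by (simp add: nb_def)
  qed
  have den0: "1 - cnj b * b \<noteq> 0" using mob_den_nz[of b b] b1 by simp
  have "(\<Phi> has_field_derivative (1 - cnj b * b) / (1 - cnj b * b)^2 * d0) (at 0)"
  proof -
    have md: "(mob b has_field_derivative (1 - cnj b * b) / (1 - cnj b * b)^2) (at (f 0))"
      using mob_deriv[OF den0, of UNIV] by (simp add: b_def)
    show ?thesis unfolding \<Phi>_def using DERIV_chain2[OF md d0] .
  qed
  then have "(\<Phi> has_field_derivative d0 / (1 - cnj b * b)) (at 0)"
    using den0 by (simp add: power2_eq_square)
  then have dc: "deriv \<Phi> 0 = d0 / (1 - cnj b * b)" by (rule DERIV_imp_deriv)
  define kc where "kc = norm (deriv \<Phi> 0)"
  have e1: "norm (1 - cnj b * b) = 1 - nb^2"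
  proof -
    have x: "1 - cnj b * b = of_real (1 - nb^2)" by (simp add: cb)
    have "norm (1 - cnj b * b) = abs (1 - nb^2)" unfolding x norm_of_real ..
    moreover have "nb^2 \<le> 1" using nb1 by (simp add: power_le_one)
    ultimately show ?thesis by simp
  qed
  have kc: "kc = norm d0 / (1 - nb^2)" unfolding kc_def dc using e1
    by (simp add: norm_divide)
  have kc0: "0 \<le> kc" by (simp add: kc_def)
  define K where "K = (1 - nb) / (1 + nb)"
  define \<rho> where "\<rho> r = r * (r + kc) / (1 + kc * r)" for r :: real
  define H where "H r = K * (1 + r) * (1 + \<rho> r) / (2 * (1 + kc * r))" for r :: real
  define q where "q r = (f (of_real r * \<zeta>) - f \<zeta>) / (of_real r * \<zeta> - \<zeta>)" for r :: real
  have key: "H r \<le> norm (q r)" if r: "0 < r" "r < 1" for r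
  proof -
    have pr: "1 + kc * r > 0" using r kc0 by (simp add: add_pos_nonneg)
    have rho_eq: "1 - \<rho> r = (1 - r) * (1 + r) / (1 + kc * r)"
    proof -
      have "1 - \<rho> r = ((1 + kc * r) - r * (r + kc)) / (1 + kc * r)"
        using pr by (simp add: \<rho>_def diff_divide_distrib)
      also have "(1 + kc * r) - r * (r + kc) = (1 - r) * (1 + r)" by (simp add: algebra_simps)
      finally show ?thesis .
    qed
    define z where "z = of_real r * \<zeta>"
    have nz: "norm z = r" using r bd by (simp add: z_def norm_mult)
    have z1: "norm z < 1" using nz r by simp
    have \<Phi>z: "norm (\<Phi> z) \<le> \<rho> r"
      using schwarz_refined[OF hol\<Phi> \<Phi>0 \<Phi>lt z1] by (simp add: nz \<rho>_def kc_def)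
    have \<rho>0: "0 \<le> \<rho> r" using r kc0 by (simp add: \<rho>_def)
    have fz1: "norm (f z) < 1" using fmaps[OF z1] .
    have \<Phi>1: "norm (\<Phi> z) < 1" using \<Phi>lt[OF z1] .
    have inv: "f z = mob (-b) (\<Phi> z)" unfolding \<Phi>_def using mob_inv[OF b1, of "f z"] fz1 by simp
    have den: "1 - cnj (-b) * \<Phi> z \<noteq> 0" using mob_den_nz[of "-b" "\<Phi> z"] b1 \<Phi>1 by simp
    have id: "1 - norm (f z) ^ 2 = (1 - nb^2) * (1 - norm (\<Phi> z)^2) / norm (1 - cnj (-b) * \<Phi> z) ^ 2"
      unfolding inv nb_def using mob_id[OF den] by simp
    have dn: "norm (1 - cnj (-b) * \<Phi> z) \<le> 1 + nb"
    proof -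
      have "norm (1 - cnj (-b) * \<Phi> z) \<le> 1 + norm (cnj (-b) * \<Phi> z)"
        using norm_triangle_ineq4[of 1 "cnj (-b) * \<Phi> z"] by simp
      also have "\<dots> \<le> 1 + nb" using \<Phi>1 nb1 by (simp add: norm_mult nb_def mult_left_le)
      finally show ?thesis .
    qed
    have dpos: "0 < norm (1 - cnj (-b) * \<Phi> z)" using den by simp
    have \<rho>1: "\<rho> r < 1"
    proof -
      note rho_eq
      moreover have "(1 - r) * (1 + r) / (1 + kc * r) > 0" using r kc0 by (simp add: add_pos_nonneg)
      ultimately show ?thesis by linarith
    qed
    have A: "(1 - nb^2) * (1 - \<rho> r ^2) / (1 + nb)^2 \<le> 1 - norm (f z) ^ 2"
      unfolding id
    proof (rule frac_le)
      show "0 \<le> (1 - nb^2) * (1 - norm (\<Phi> z)^2)" using nb1 \<Phi>1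
        by (intro mult_nonneg_nonneg) (auto simp: abs_square_le_1 power_le_one)
      show "(1 - nb^2) * (1 - \<rho> r^2) \<le> (1 - nb^2) * (1 - norm (\<Phi> z)^2)"
        using nb1 \<Phi>z by (intro mult_left_mono) (auto intro: power_mono simp: abs_square_le_1)
      show "0 < norm (1 - cnj (-b) * \<Phi> z) ^ 2" using dpos by simp
      show "norm (1 - cnj (-b) * \<Phi> z) ^ 2 \<le> (1 + nb)^2" using dn dpos by (intro power_mono) auto
    qed
    have A2: "(1 - nb^2) * (1 - \<rho> r ^2) / (1 + nb)^2 = K * (1 - \<rho> r) * (1 + \<rho> r)"
    proof -
      have nz: "1 + nb \<noteq> 0" using nb1 by simp
      have "(1 - nb^2) * (1 - \<rho> r ^2) / (1 + nb)^2 = ((1 + nb) * ((1 - nb) * (1 - \<rho> r ^2))) / ((1 + nb) * (1 + nb))"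
        by (simp add: power2_eq_square algebra_simps)
      also have "\<dots> = ((1 - nb) * (1 - \<rho> r ^2)) / (1 + nb)"
        by (rule mult_divide_mult_cancel_left[OF nz])
      also have "\<dots> = K * (1 - \<rho> r) * (1 + \<rho> r)"
        by (simp add: K_def power2_eq_square algebra_simps)
      finally show ?thesis .
    qed
    have B: "1 - norm (f z) ^ 2 \<le> 2 * norm (f z - f \<zeta>)"
    proof -
      have "norm (f \<zeta>) - norm (f z) \<le> norm (f z - f \<zeta>)"
        by (metis norm_minus_commute norm_triangle_ineq2)
      moreover have "0 \<le> (1 - norm (f z))^2" by simp
      moreover have "(1 - norm (f z))^2 = 1 - 2 * norm (f z) + norm (f z) ^ 2"
        by (simp add: power2_eq_square algebra_simps)
      ultimately show ?thesis using fz by linarith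
    qed
    have nq: "norm (q r) = norm (f z - f \<zeta>) / (1 - r)"
    proof -
      have x: "of_real r * \<zeta> - \<zeta> = - (of_real (1 - r) * \<zeta>)" by (simp add: algebra_simps)
      have "norm (of_real r * \<zeta> - \<zeta>) = abs (1 - r) * norm \<zeta>"
        unfolding x norm_minus_cancel norm_mult norm_of_real ..
      then have "norm (of_real r * \<zeta> - \<zeta>) = 1 - r" using r bd by simp
      then show ?thesis by (simp add: q_def z_def norm_divide)
    qed
    have "K * (1 - \<rho> r) * (1 + \<rho> r) = (1 - r) * (2 * H r)"
      unfolding rho_eq H_def using pr by (simp add: field_simps)
    then have "(1 - r) * (2 * H r) \<le> 2 * norm (f z - f \<zeta>)" using A A2 B by linarith
    then have "H r * (1 - r) \<le> norm (f z - f \<zeta>)" by (simp add: algebra_simps)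
    then show ?thesis unfolding nq using r by (simp add: pos_le_divide_eq)
  qed
  have lim_q: "(q \<longlongrightarrow> d) (at_left 1)"
  proof -
    have dq: "((\<lambda>y. (f y - f \<zeta>) / (y - \<zeta>)) \<longlongrightarrow> d) (at \<zeta> within ball 0 1)"
      using d\<zeta> by (simp add: has_field_derivative_iff)
    have path: "filterlim (\<lambda>r::real. of_real r * \<zeta>) (at \<zeta> within ball 0 1) (at_left 1)"
      unfolding filterlim_at
    proof
      have "\<forall>\<^sub>F r in at_left (1::real). r \<in> {0<..<1}" by (rule eventually_at_left_real) simp
      then show "\<forall>\<^sub>F r in at_left (1::real). of_real r * \<zeta> \<in> ball 0 1 \<and> of_real r * \<zeta> \<noteq> \<zeta>"
      proof (rule eventually_mono)
        fix r :: real assume r: "r \<in> {0<..<1}"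
        have "\<zeta> \<noteq> 0" using bd by auto
        then show "of_real r * \<zeta> \<in> ball 0 1 \<and> of_real r * \<zeta> \<noteq> \<zeta>"
          using r bd by (auto simp: norm_mult)
      qed
      have "((\<lambda>r::real. of_real r * \<zeta>) \<longlongrightarrow> of_real 1 * \<zeta>) (at_left 1)"
        by (intro tendsto_intros)
      then show "((\<lambda>r::real. of_real r * \<zeta>) \<longlongrightarrow> \<zeta>) (at_left 1)" by simp
    qed
    show ?thesis unfolding q_def[abs_def] using filterlim_compose[OF dq path] .
  qed
  have lim_H: "(H \<longlongrightarrow> H 1) (at_left 1)"
  proof -
    have "((\<lambda>r. K * (1 + r) * (1 + r * (r + kc) / (1 + kc * r)) / (2 * (1 + kc * r))) \<longlongrightarrow>
           K * (1 + 1) * (1 + 1 * (1 + kc) / (1 + kc * 1)) / (2 * (1 + kc * 1))) (at_left 1)"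
      using kc0 by (intro tendsto_intros) (auto simp: add_nonneg_eq_0_iff)
    then show ?thesis by (simp add: H_def[abs_def] \<rho>_def)
  qed
  have "H 1 \<le> norm d"
  proof (rule tendsto_le[OF trivial_limit_at_left_real])
    show "((\<lambda>r. norm (q r)) \<longlongrightarrow> norm d) (at_left 1)" using lim_q by (rule tendsto_norm)
    show "(H \<longlongrightarrow> H 1) (at_left 1)" by (rule lim_H)
    have "\<forall>\<^sub>F r in at_left (1::real). r \<in> {0<..<1}" by (rule eventually_at_left_real) simp
    then show "\<forall>\<^sub>F r in at_left 1. H r \<le> norm (q r)"
      by (rule eventually_mono) (use key in auto)
  qed
  moreover have "H 1 = 2 * (1 - nb)^2 / (1 - nb^2 + norm d0)"
  proof -
    have "H 1 = 2 * K / (1 + kc)" using kc0 by (simp add: H_def \<rho>_def field_simps)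
    also have "\<dots> = 2 * (1 - nb)^2 / (1 - nb^2 + norm d0)"
    proof -
      have u: "1 - nb^2 > 0" using nb1 by (simp add: abs_square_less_1)
      have u2: "1 - nb^2 + norm d0 > 0" using u by (simp add: add_pos_nonneg)
      have n1: "1 + nb \<noteq> 0" using nb1 by simp
      have e: "1 + kc = (1 - nb^2 + norm d0) / (1 - nb^2)" unfolding kc using u
        by (simp add: add_divide_distrib)
      have k2: "K * (1 - nb^2) = (1 - nb)^2"
      proof -
        have "K * (1 - nb^2) = (1 - nb) * ((1 + nb) * (1 - nb)) / (1 + nb)"
          by (simp add: K_def power2_eq_square algebra_simps)
        also have "\<dots> = (1 - nb) * (1 - nb)" using n1 by simp
        finally show ?thesis by (simp add: power2_eq_square)
      qed
      have "2 * K / (1 + kc) = 2 * (K * (1 - nb^2)) / (1 - nb^2 + norm d0)"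
        unfolding e using u u2 by (simp add: field_simps)
      then show ?thesis unfolding k2 .
    qed
    finally show ?thesis .
  qed
  ultimately show ?thesis by (simp add: nb_def b_def)
qed



definition cin :: "complex^'n \<Rightarrow> complex^'n \<Rightarrow> complex" where
  "cin x y = (\<Sum>i\<in>UNIV. x$i * cnj (y$i))"

lemma norm_sq_vec: "(norm (x::complex^'n))^2 = (\<Sum>i\<in>UNIV. (norm (x$i))^2)"
  by (simp add: norm_vec_def L2_set_def sum_nonneg)

lemma cin_self: "cin x x = of_real ((norm x)^2)"
proof -
  have "cin x x = (\<Sum>i\<in>UNIV. of_real ((norm (x$i))^2))"
    unfolding cin_def by (rule sum.cong) (simp_all add: complex_norm_square[symmetric])
  also have "\<dots> = of_real (\<Sum>i\<in>UNIV. (norm (x$i))^2)" by simp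
  finally show ?thesis by (simp only: norm_sq_vec)
qed

lemma cin_CS: "norm (cin x y) \<le> norm x * norm y"
proof -
  have "norm (cin x y) \<le> (\<Sum>i\<in>UNIV. norm (x$i * cnj (y$i)))"
    unfolding cin_def by (rule norm_sum)
  also have "\<dots> = (\<Sum>i\<in>UNIV. \<bar>norm (x$i)\<bar> * \<bar>norm (y$i)\<bar>)" by (simp add: norm_mult)
  also have "\<dots> \<le> L2_set (\<lambda>i. norm (x$i)) UNIV * L2_set (\<lambda>i. norm (y$i)) UNIV"
    by (rule L2_set_mult_ineq)
  also have "\<dots> = norm x * norm y" by (simp add: norm_vec_def)
  finally show ?thesis .
qed

lemma cin_diff_left: "cin (x - y) z = cin x z - cin y z"
  unfolding cin_def by (simp add: sum_subtractf algebra_simps)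
lemma cin_diff_right: "cin z (x - y) = cin z x - cin z y"
  unfolding cin_def by (simp add: sum_subtractf algebra_simps)
lemma cin_add_left: "cin (x + y) z = cin x z + cin y z"
  unfolding cin_def by (simp add: sum.distrib algebra_simps)
lemma cin_add_right: "cin z (x + y) = cin z x + cin z y"
  unfolding cin_def by (simp add: sum.distrib algebra_simps)
lemma cin_scale_left: "cin (c *s x) y = c * cin x y"
  unfolding cin_def by (simp add: sum_distrib_left algebra_simps)
lemma cin_scale_right: "cin x (c *s y) = cnj c * cin x y"
  unfolding cin_def by (simp add: sum_distrib_left algebra_simps)
lemma cin_cnj: "cnj (cin x y) = cin y x"
  unfolding cin_def by (simp add: mult.commute)
lemma cin_zero_left: "cin 0 y = 0"
  unfolding cin_def by simp

lemma cin_deriv: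
  fixes F :: "complex \<Rightarrow> complex^'n"
  assumes "\<And>i. ((\<lambda>z. F z $ i) has_field_derivative (D $ i)) (at x within S)"
  shows "((\<lambda>z. cin (F z) c) has_field_derivative cin D c) (at x within S)"
  unfolding cin_def
  by (rule DERIV_sum) (rule DERIV_cmult_right[OF assms])

lemma cin_holo:
  fixes F :: "complex \<Rightarrow> complex^'n"
  assumes "\<And>i. (\<lambda>z. F z $ i) holomorphic_on S"
  shows "(\<lambda>z. cin (F z) c) holomorphic_on S"
  unfolding cin_def
  by (intro holomorphic_on_sum holomorphic_on_mult assms holomorphic_on_const)

lemma T_alg:
  fixes s Y \<mu> c A :: complex
  assumes "1 + s \<noteq> 0" "A = 1 - s^2"
  shows "s*(s*Y + (c/(1+s))*\<mu>) + (\<mu>/(1+s))*(s*c + (c/(1+s))*A) = s^2*Y + \<mu>*c"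
proof -
  have f: "1 - s^2 = (1-s)*(1+s)" by (simp add: power2_eq_square algebra_simps)
  have E: "(c/(1+s))*A = c * (1 - s)"
    unfolding assms(2) f using assms(1) by simp
  have e2: "s*c + c*(1-s) = c" by (simp add: algebra_simps)
  have e3: "s*((c/(1+s))*\<mu>) + (\<mu>/(1+s))*c = \<mu>*c"
  proof -
    define w where "w = \<mu>*c/(1+s)"
    have w1: "(\<mu>/(1+s))*c = w" by (simp add: w_def)
    have w2: "s*((c/(1+s))*\<mu>) = s*w" by (simp add: w_def ac_simps)
    have w3: "(1+s)*w = \<mu>*c" using assms(1) by (simp add: w_def)
    have "s*w + w = (1+s)*w" by (simp add: algebra_simps)
    then show ?thesis unfolding w1 w2 w3 .
  qed
  show ?thesis unfolding E e2 using e3 by (simp add: algebra_simps power2_eq_square)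
qed

definition Tm :: "real \<Rightarrow> complex^'n \<Rightarrow> complex^'n \<Rightarrow> complex^'n" where
  "Tm s a y = (complex_of_real s) *s y + (cin y a / complex_of_real (1+s)) *s a"

lemma T_adj: "cin (Tm s a y) w = cin y (Tm s a w)"
proof -
  have "cin (Tm s a y) w = of_real s * cin y w + (cin y a / of_real (1+s)) * cin a w"
    by (simp add: Tm_def cin_add_left cin_scale_left)
  moreover have "cin y (Tm s a w) = of_real s * cin y w + (cin a w / of_real (1+s)) * cin y a"
    by (simp add: Tm_def cin_add_right cin_scale_right cin_cnj)
  ultimately show ?thesis by (simp add: algebra_simps)
qed

lemma T_norm:
  assumes s: "s \<ge> 0" "s^2 = 1 - (norm a)^2"
  shows "(norm (Tm s a y))^2 = s^2 * (norm y)^2 + (norm (cin y a))^2"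
proof -
  define k where "k = cin y a / complex_of_real (1+s)"
  have ck: "cnj k = cin a y / complex_of_real (1+s)" by (simp add: k_def cin_cnj)
  have ns: "1 + complex_of_real s \<noteq> 0"
  proof
    assume h: "1 + complex_of_real s = 0"
    have "Re (1 + complex_of_real s) = 0" using h by simp
    then show False using s by simp
  qed
  have "cin (Tm s a y) (Tm s a y) = of_real s * cin y (Tm s a y) + k * cin a (Tm s a y)"
    by (simp add: Tm_def cin_add_left cin_scale_left k_def)
  also have "cin y (Tm s a y) = of_real s * cin y y + cnj k * cin y a"
    by (simp add: Tm_def cin_add_right cin_scale_right k_def)
  also have "cin a (Tm s a y) = of_real s * cin a y + cnj k * cin a a"
    by (simp add: Tm_def cin_add_right cin_scale_right k_def)
  finally have e: "cin (Tm s a y) (Tm s a y) =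
     of_real s * (of_real s * cin y y + (cin a y / (1 + of_real s)) * cin y a)
     + (cin y a / (1 + of_real s)) * (of_real s * cin a y + (cin a y / (1 + of_real s)) * cin a a)"
    unfolding ck by (simp add: k_def)
  have A: "cin a a = 1 - (complex_of_real s)^2"
  proof -
    have h: "(norm a)^2 = 1 - s^2" using s(2) by simp
    have "cin a a = complex_of_real (1 - s^2)" by (simp only: cin_self h)
    then show ?thesis by simp
  qed
  have "cin (Tm s a y) (Tm s a y) = (of_real s)^2 * cin y y + cin y a * cin a y"
    unfolding e by (rule T_alg[OF ns A])
  also have "cin y a * cin a y = of_real ((norm (cin y a))^2)"
    by (metis cin_cnj complex_norm_square)
  finally have "of_real ((norm (Tm s a y))^2) = (complex_of_real (s^2 * (norm y)^2 + (norm (cin y a))^2))"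
    by (simp add: cin_self)
  then show ?thesis using of_real_eq_iff by blast
qed

lemma real_id_T:
  fixes S A n p q :: real
  assumes "S = 1 - A"
  shows "S*(n - 2*p + A) + (p - A)^2 + q^2 = ((1-p)^2 + q^2) - S*(1-n)"
  unfolding assms by (simp add: power2_eq_square algebra_simps)

lemma T_xa:
  assumes s: "s \<ge> 0" "s^2 = 1 - (norm a)^2"
  shows "(norm (Tm s a (x - a)))^2 = (norm (1 - cin x a))^2 - s^2 * (1 - (norm x)^2)"
proof -
  define \<mu> where "\<mu> = cin x a"
  have c1: "cin (x - a) a = \<mu> - of_real ((norm a)^2)"
    by (simp add: \<mu>_def cin_diff_left cin_self)
  have "of_real ((norm (x - a))^2) = cin (x - a) (x - a)" by (simp add: cin_self)
  also have "\<dots> = cin x x - \<mu> - cnj \<mu> + cin a a"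
  proof -
    have "cin a x = cnj \<mu>" by (simp add: \<mu>_def cin_cnj)
    then show ?thesis by (simp add: cin_diff_left cin_diff_right \<mu>_def)
  qed
  finally have "of_real ((norm (x - a))^2) = of_real ((norm x)^2) - \<mu> - cnj \<mu> + of_real ((norm a)^2)"
    by (simp add: cin_self)
  then have "Re (of_real ((norm (x - a))^2)) = Re (of_real ((norm x)^2) - \<mu> - cnj \<mu> + of_real ((norm a)^2))"
    by simp
  then have nxa: "(norm (x - a))^2 = (norm x)^2 - 2 * Re \<mu> + (norm a)^2" by simp
  have "(norm (Tm s a (x - a)))^2 = s^2 * (norm (x - a))^2 + (norm (cin (x - a) a))^2"
    by (rule T_norm[OF s])
  also have "\<dots> = s^2 * ((norm x)^2 - 2 * Re \<mu> + (norm a)^2) + ((Re \<mu> - (norm a)^2)^2 + (Im \<mu>)^2)"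
    unfolding nxa c1 by (simp add: cmod_power2)
  also have "\<dots> = (((1 - Re \<mu>)^2 + (Im \<mu>)^2)) - s^2 * (1 - (norm x)^2)"
    using real_id_T[OF s(2), of "(norm x)^2" "Re \<mu>" "Im \<mu>"] by simp
  also have "(1 - Re \<mu>)^2 + (Im \<mu>)^2 = (norm (1 - \<mu>))^2" by (simp add: cmod_power2)
  finally show ?thesis by (simp add: \<mu>_def)
qed

lemma T_bound:
  assumes s: "s > 0" "s^2 = 1 - (norm a)^2" and x: "norm x < 1" and y: "y \<noteq> 0"
  shows "norm (cin (x - a) (Tm s a y)) < norm (1 - cin x a) * norm y"
proof -
  have "cin (x - a) (Tm s a y) = cin (Tm s a (x - a)) y" by (simp add: T_adj)
  then have "norm (cin (x - a) (Tm s a y)) \<le> norm (Tm s a (x - a)) * norm y"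
    using cin_CS by metis
  also have "\<dots> < norm (1 - cin x a) * norm y"
  proof (rule mult_strict_right_mono)
    have "s^2 > 0" using s(1) by simp
    moreover have "1 - (norm x)^2 > 0" using x by (simp add: abs_square_less_1)
    ultimately have "s^2 * (1 - (norm x)^2) > 0" by simp
    then have "(norm (Tm s a (x - a)))^2 < (norm (1 - cin x a))^2"
      using T_xa[of s a x] s by simp
    then show "norm (Tm s a (x - a)) < norm (1 - cin x a)"
      by (rule power_less_imp_less_base) simp
    show "0 < norm y" using y by simp
  qed
  finally show ?thesis .
qed

lemma deriv0_bound:
  fixes F :: "complex \<Rightarrow> complex^'n" and D0 :: "complex^'n"
  assumes holo: "\<And>i. (\<lambda>z. F z $ i) holomorphic_on ball 0 1"
    and maps: "F ` ball 0 1 \<subseteq> ball 0 1"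
    and d0: "\<And>i. ((\<lambda>z. F z $ i) has_field_derivative (D0 $ i)) (at 0)"
  shows "norm D0 \<le> sqrt (1 - (norm (F 0))^2)"
proof -
  define a where "a = F 0"
  have Fb: "norm (F z) < 1" if "norm z < 1" for z
  proof -
    have "z \<in> ball 0 1" using that by simp
    then have "F z \<in> ball 0 1" using maps by blast
    then show ?thesis by simp
  qed
  have na: "norm a < 1" using Fb[of 0] a_def by simp
  define s where "s = sqrt (1 - (norm a)^2)"
  have s2: "s^2 = 1 - (norm a)^2" unfolding s_def using na by (simp add: abs_square_le_1 less_imp_le)
  have spos: "s > 0" unfolding s_def using na by (simp add: abs_square_less_1)
  define v where "v = D0"
  define y where "y = Tm s a v"
  have Tn: "(norm y)^2 = s^2 * (norm v)^2 + (norm (cin v a))^2"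
    unfolding y_def using T_norm[of s a v] spos s2 by simp
  have main: "s^2 * (norm v)^2 \<le> s^2 * s^2"
  proof (cases "y = 0")
    case True
    then have "0 = s^2 * (norm v)^2 + (norm (cin v a))^2" using Tn by simp
    moreover have "0 \<le> (norm (cin v a))^2" by simp
    ultimately have "s^2 * (norm v)^2 \<le> 0" by linarith
    moreover have "0 \<le> s^2 * s^2" by simp
    ultimately show ?thesis by linarith
  next
    case False
    define c where "c = Tm s a y"
    define g where "g z = (cin (F z) c - cin a c) / (1 - cin (F z) a)" for z
    have den: "1 - cin (F z) a \<noteq> 0" if "norm z < 1" for z
    proof
      assume "1 - cin (F z) a = 0"
      then have "cin (F z) a = 1" by simp
      then have "norm (cin (F z) a) = 1" by simp
      moreover have "norm (cin (F z) a) \<le> norm (F z) * norm a" by (rule cin_CS)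
      moreover have "norm a * norm (F z) \<le> norm a"
        by (rule mult_left_le) (use Fb[OF that] in auto)
      ultimately show False using na by (simp add: mult.commute)
    qed
    have holg: "g holomorphic_on ball 0 1" unfolding g_def[abs_def]
      by (intro holomorphic_on_divide holomorphic_on_diff cin_holo holo holomorphic_on_const)
         (use den in auto)
    have g0: "g 0 = 0" by (simp add: g_def a_def)
    have glt: "norm (g z) < norm y" if "norm z < 1" for z
    proof -
      have "norm (cin (F z) c - cin a c) < norm (1 - cin (F z) a) * norm y"
        unfolding c_def cin_diff_left[symmetric] using T_bound[OF spos s2 Fb[OF that] False] .
      moreover have "norm (1 - cin (F z) a) > 0" using den[OF that] by simp
      ultimately show ?thesis by (simp add: g_def norm_divide divide_less_eq mult.commute)
    qed
    have dN: "((\<lambda>z. cin (F z) c - cin a c) has_field_derivative cin v c - 0) (at 0)"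
      by (intro DERIV_diff cin_deriv DERIV_const) (simp add: v_def d0)
    have dD: "((\<lambda>z. 1 - cin (F z) a) has_field_derivative 0 - cin v a) (at 0)"
      by (intro DERIV_diff cin_deriv DERIV_const) (simp add: v_def d0)
    have den0: "1 - cin (F 0) a \<noteq> 0" using den[of 0] by simp
    have "(g has_field_derivative ((cin v c - 0) * (1 - cin (F 0) a) - (cin (F 0) c - cin a c) * (0 - cin v a)) / ((1 - cin (F 0) a) * (1 - cin (F 0) a))) (at 0)"
      unfolding g_def[abs_def] by (rule DERIV_divide[OF dN dD den0])
    moreover have "((cin v c - 0) * (1 - cin (F 0) a) - (cin (F 0) c - cin a c) * (0 - cin v a)) / ((1 - cin (F 0) a) * (1 - cin (F 0) a))
        = cin v c / (1 - cin a a)"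
      using den0 by (simp add: a_def[symmetric])
    ultimately have dg: "(g has_field_derivative cin v c / (1 - cin a a)) (at 0)" by simp
    have "norm (cin v c / (1 - cin a a)) \<le> norm y"
      by (rule schwarz_M[OF holg g0 glt dg])
    moreover have "cin v c = complex_of_real ((norm y)^2)"
      unfolding c_def y_def by (simp add: T_adj[symmetric] cin_self)
    moreover have "1 - cin a a = complex_of_real (s^2)"
    proof -
      have h: "(norm a)^2 = 1 - s^2" using s2 by simp
      have "cin a a = complex_of_real (1 - s^2)" by (simp only: cin_self h)
      then show ?thesis by simp
    qed
    ultimately have "(norm y)^2 / s^2 \<le> norm y" by (simp add: norm_divide norm_power)
    then have "(norm y)^2 \<le> s^2 * norm y" using spos by (simp add: divide_le_eq mult.commute)
    then have "norm y * norm y \<le> s^2 * norm y" by (simp add: power2_eq_square)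
    then have "norm y \<le> s^2" using False by simp
    then have "(norm y)^2 \<le> (s^2)^2" by (intro power_mono) auto
    then have A: "(norm y)^2 \<le> s^2 * s^2" by (simp add: power2_eq_square)
    show ?thesis using Tn A zero_le_power2[of "norm (cin v a)"] by linarith
  qed
  moreover have "s^2 > 0" using spos by simp
  ultimately have "(norm v)^2 \<le> s^2" by (rule mult_left_le_imp_le)
  then have "norm v \<le> s" using power2_le_imp_le[OF _ less_imp_le[OF spos]] by blast
  then show ?thesis by (simp add: v_def s_def a_def)
qed

lemma schwarz_pick0:
  assumes holf: "f holomorphic_on ball 0 1" and fmaps: "\<And>z. norm z < 1 \<Longrightarrow> norm (f z) < 1"
    and d0: "(f has_field_derivative d0) (at 0)"
  shows "norm d0 \<le> 1 - (norm (f 0))^2"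
proof -
  define b where "b = f 0"
  have b1: "norm b < 1" using fmaps[of 0] b_def by simp
  define \<Phi> where "\<Phi> z = mob b (f z)" for z
  have hol\<Phi>: "\<Phi> holomorphic_on ball 0 1" unfolding \<Phi>_def[abs_def]
    by (rule holomorphic_on_compose_gen[OF holf mob_holo[OF b1], unfolded o_def]) (use fmaps in auto)
  have \<Phi>0: "\<Phi> 0 = 0" by (simp add: \<Phi>_def mob_def b_def)
  have \<Phi>lt: "norm (\<Phi> z) < 1" if "norm z < 1" for z
    unfolding \<Phi>_def using mob_lt1[OF b1 fmaps[OF that]] .
  have den0: "1 - cnj b * b \<noteq> 0" using mob_den_nz[of b b] b1 by simp
  have "(\<Phi> has_field_derivative (1 - cnj b * b) / (1 - cnj b * b)^2 * d0) (at 0)"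
  proof -
    have md: "(mob b has_field_derivative (1 - cnj b * b) / (1 - cnj b * b)^2) (at (f 0))"
      using mob_deriv[OF den0, of UNIV] by (simp add: b_def)
    show ?thesis unfolding \<Phi>_def using DERIV_chain2[OF md d0] .
  qed
  then have "(\<Phi> has_field_derivative d0 / (1 - cnj b * b)) (at 0)"
    using den0 by (simp add: power2_eq_square)
  from schwarz_M[OF hol\<Phi> \<Phi>0 _ this, of 1] \<Phi>lt
  have le: "norm (d0 / (1 - cnj b * b)) \<le> 1" by simp
  have e1: "norm (1 - cnj b * b) = 1 - (norm b)^2"
  proof -
    have "cnj b * b = of_real (norm b)^2" using complex_norm_square[of b] by (simp add: mult.commute)
    then have x: "1 - cnj b * b = of_real (1 - (norm b)^2)" by simp
    have "norm (1 - cnj b * b) = abs (1 - (norm b)^2)" unfolding x norm_of_real ..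
    moreover have "(norm b)^2 \<le> 1" using b1 by (simp add: power_le_one)
    ultimately show ?thesis by simp
  qed
  have pos: "0 < norm (1 - cnj b * b)" using den0 by simp
  from le have "norm d0 \<le> norm (1 - cnj b * b)" using pos by (simp add: norm_divide divide_le_eq)
  then show ?thesis using e1 b_def by simp
qed

lemma B_eq:
  fixes t s :: real assumes "t < 1"
  shows "2 * (1 - t)^2 / (1 - t^2 + s) = 2 * (1 - t) / ((1 + t) + s / (1 - t))"
proof -
  have nz: "1 - t \<noteq> 0" using assms by simp
  have q: "(1 - t) * (s / (1 - t)) = s" using nz by simp
  have "(1 - t) * ((1 + t) + s / (1 - t)) = (1 - t) * (1 + t) + s"
    unfolding distrib_left q ..
  then have "1 - t^2 + s = (1 - t) * ((1 + t) + s / (1 - t))"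
    by (simp add: algebra_simps power2_eq_square)
  then have "2 * (1 - t)^2 / (1 - t^2 + s) = ((1 - t) * (2 * (1 - t))) / ((1 - t) * ((1 + t) + s / (1 - t)))"
    by (simp add: power2_eq_square algebra_simps)
  also have "\<dots> = 2 * (1 - t) / ((1 + t) + s / (1 - t))"
    by (rule mult_divide_mult_cancel_left[OF nz])
  finally show ?thesis .
qed

lemma B_mono:
  fixes t1 t2 s1 s2 :: real
  assumes "0 \<le> t1" "t1 \<le> t2" "t2 < 1" "0 \<le> s1" "s1 \<le> s2"
  shows "2 * (1 - t2)^2 / (1 - t2^2 + s2) \<le> 2 * (1 - t1)^2 / (1 - t1^2 + s1)"
proof -
  have q1: "s1 / (1 - t1) \<le> s2 / (1 - t2)"
    by (rule frac_le) (use assms in auto)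
  have q0: "0 \<le> s1 / (1 - t1)" using assms by simp
  have "2 * (1 - t2) / ((1 + t2) + s2 / (1 - t2)) \<le> 2 * (1 - t1) / ((1 + t1) + s1 / (1 - t1))"
  proof (rule frac_le)
    show "0 \<le> 2 * (1 - t1)" using assms by simp
    show "2 * (1 - t2) \<le> 2 * (1 - t1)" using assms by simp
    show "0 < (1 + t1) + s1 / (1 - t1)" using assms q0 by linarith
    show "(1 + t1) + s1 / (1 - t1) \<le> (1 + t2) + s2 / (1 - t2)" using assms q1 by linarith
  qed
  then show ?thesis using B_eq assms by simp
qed

theorem theorem2p4:
  fixes F :: "complex \<Rightarrow> complex ^ 'm" and \<zeta> :: complex
    and D0 D\<zeta> :: "complex ^ 'm"
  assumes holo: "\<And>i. (\<lambda>z. F z $ i) holomorphic_on ball 0 1"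
    and maps: "F ` ball 0 1 \<subseteq> ball 0 1"
    and bdry: "norm \<zeta> = 1"
    and Fzeta: "norm (F \<zeta>) = 1"
    and d\<zeta>: "\<And>i. ((\<lambda>z. F z $ i) has_field_derivative (D\<zeta> $ i)) (at \<zeta> within ball 0 1)"
    and d0: "\<And>i. ((\<lambda>z. F z $ i) has_field_derivative (D0 $ i)) (at 0)"
  shows "norm D\<zeta> \<ge> 2 * (1 - norm (F 0))^2 / (1 - (norm (F 0))^2 + norm D0)
         \<and> (CARD('m) \<ge> 2 \<longrightarrow>
           norm D\<zeta> \<ge> 2 * (1 - norm (F 0))^2 / (1 - (norm (F 0))^2 + sqrt (1 - (norm (F 0))^2)))
         \<and> (CARD('m) = 1 \<longrightarrow> norm D\<zeta> \<ge> (1 - norm (F 0)) / (1 + norm (F 0)))"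
proof -
  define a where "a = F 0"
  define u where "u = F \<zeta>"
  define f where "f z = cin (F z) u" for z
  have Fb: "norm (F z) < 1" if "norm z < 1" for z
  proof -
    have "z \<in> ball 0 1" using that by simp
    then have "F z \<in> ball 0 1" using maps by blast
    then show ?thesis by simp
  qed
  have na: "norm a < 1" using Fb[of 0] a_def by simp
  have nu: "norm u = 1" using Fzeta u_def by simp
  have holf: "f holomorphic_on ball 0 1" unfolding f_def[abs_def] by (rule cin_holo[OF holo])
  have fmaps: "norm (f z) < 1" if "norm z < 1" for z
    using cin_CS[of "F z" u] nu Fb[OF that] by (simp add: f_def)
  have fz: "norm (f \<zeta>) = 1" by (simp add: f_def cin_self nu u_def[symmetric])
  have df\<zeta>: "(f has_field_derivative cin D\<zeta> u) (at \<zeta> within ball 0 1)"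
    unfolding f_def[abs_def] by (rule cin_deriv[OF d\<zeta>])
  have df0: "(f has_field_derivative cin D0 u) (at 0)"
    unfolding f_def[abs_def] by (rule cin_deriv[OF d0])
  have S: "norm (cin D\<zeta> u) \<ge> 2 * (1 - norm (f 0))^2 / (1 - (norm (f 0))^2 + norm (cin D0 u))"
    by (rule scalar_boundary[OF holf fmaps bdry fz df\<zeta> df0])
  have t1: "norm (f 0) \<le> norm a" using cin_CS[of a u] nu by (simp add: f_def a_def)
  have s1: "norm (cin D0 u) \<le> norm D0" using cin_CS[of D0 u] nu by simp
  have dz: "norm (cin D\<zeta> u) \<le> norm D\<zeta>" using cin_CS[of D\<zeta> u] nu by simp
  have P1: "norm D\<zeta> \<ge> 2 * (1 - norm a)^2 / (1 - (norm a)^2 + norm D0)"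
  proof -
    have "2 * (1 - norm a)^2 / (1 - (norm a)^2 + norm D0)
        \<le> 2 * (1 - norm (f 0))^2 / (1 - (norm (f 0))^2 + norm (cin D0 u))"
      by (rule B_mono) (use t1 s1 na in auto)
    then show ?thesis using S dz by linarith
  qed
  have P2: "norm D\<zeta> \<ge> 2 * (1 - norm a)^2 / (1 - (norm a)^2 + sqrt (1 - (norm a)^2))"
  proof -
    have "norm D0 \<le> sqrt (1 - (norm a)^2)" using deriv0_bound[OF holo maps d0] a_def by simp
    then have "2 * (1 - norm a)^2 / (1 - (norm a)^2 + sqrt (1 - (norm a)^2))
        \<le> 2 * (1 - norm a)^2 / (1 - (norm a)^2 + norm D0)"
      by (intro B_mono) (use na in auto)
    then show ?thesis using P1 by linarith
  qed
  have P3: "norm D\<zeta> \<ge> (1 - norm a) / (1 + norm a)" if c1: "CARD('m) = 1"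
  proof -
    obtain i :: 'm where Ui: "UNIV = {i}" using c1 card_1_singletonE by blast
    have nv: "norm x = norm (x $ i)" for x :: "complex^'m"
    proof -
      have "(\<Sum>j\<in>UNIV. (norm (x$j))^2) = (\<Sum>j\<in>{i}. (norm (x$j))^2)" by (simp only: Ui)
      then have "(norm x)^2 = (norm (x $ i))^2" using norm_sq_vec[of x] by simp
      then show ?thesis by (simp add: power2_eq_iff_nonneg)
    qed
    have h1: "(\<lambda>z. F z $ i) holomorphic_on ball 0 1" by (rule holo)
    have m1: "norm (F z $ i) < 1" if "norm z < 1" for z using Fb[OF that] nv by simp
    have "norm (D0 $ i) \<le> 1 - (norm (F 0 $ i))^2" by (rule schwarz_pick0[OF h1 m1 d0])
    then have D0le: "norm D0 \<le> 1 - (norm a)^2" using nv a_def by simp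
    have "2 * (1 - norm a)^2 / (1 - (norm a)^2 + (1 - (norm a)^2))
        \<le> 2 * (1 - norm a)^2 / (1 - (norm a)^2 + norm D0)"
      by (intro B_mono) (use na D0le in auto)
    moreover have "2 * (1 - norm a)^2 / (1 - (norm a)^2 + (1 - (norm a)^2)) = (1 - norm a) / (1 + norm a)"
    proof -
      have nz: "1 - norm a \<noteq> 0" using na by simp
      have "2 * (1 - norm a)^2 / (1 - (norm a)^2 + (1 - (norm a)^2))
          = ((2 * (1 - norm a)) * (1 - norm a)) / ((2 * (1 - norm a)) * (1 + norm a))"
        by (simp add: power2_eq_square algebra_simps)
      also have "\<dots> = (1 - norm a) / (1 + norm a)"
        by (rule mult_divide_mult_cancel_left) (use nz in simp)
      finally show ?thesis .
    qed
    ultimately show ?thesis using P1 by linarith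
  qed
  show ?thesis using P1 P2 P3 by (simp add: a_def)
qed


end
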